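(* Fix $a\ge0$ and $0\le\alpha\le\beta$. There is a constant $M_a^{\alpha,\beta}>0$, independent of $n$, $x$ and $f$, such that for every $f\in C_\rho^k[0,\infty)$ and every integer $n\ge1$, $$\sup_{x\ge0}\frac{|T_{n,a}^{\alpha,\beta}(f;x)-f(x)|}{(1+x^2)^3}\le M_a^{\alpha,\beta}\,\Omega\!\left(f;(n+\beta)^{-1/2}\right).$$
   Context: Fix $a\ge 0$ and real numbers $\alpha,\beta$ with $0\le\alpha\le\beta$. For $n\in\mathbb N=\{1,2,\dots\}$ let $(n)_0=1$, $(n)_i=n(n+1)\cdots(n+i-1)$, and $p_k(n,a)=\sum_{i=0}^{k}\binom{k}{i}(n)_i a^{k-i}$. For $x\ge0$ and $k=0,1,2,\dots$ put $W_{n,k}^a(x)=e^{-\frac{ax}{1+x}}\frac{p_k(n,a)}{k!}\frac{x^k}{(1+x)^{k+n}}$ (so that $\sum_{k\ge0}W_{n,k}^a(x)=1$). The generalized Baskakov–Kantorovich–Stancu operator is $T_{n,a}^{\alpha,\beta}(f;x)=(n+\beta)\sum_{k=0}^{\infty}W_{n,k}^a(x)\int_{\frac{k+\alpha}{n+\beta}}^{\frac{k+\alpha+1}{n+\beta}}f(t)\,dt$. With the weight $\rho(x)=1+x^2$: $C_\rho[0,\infty)$ is the set of continuous $f$ on $[0,\infty)$ with $|f(x)|\le M_f\rho(x)$ for some constant $M_f$, and $C_\rho^k[0,\infty)$ is the set of $f\in C_\rho[0,\infty)$ for which $\lim_{x\to\infty}f(x)/\rho(x)$ exists and is finite. The weighted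 modulus of continuity (Ispir) is, for $\delta>0$, $\Omega(f;\delta)=\sup\left\{\frac{|f(x+h)-f(x)|}{(1+h^2)(1+x^2)}: x\ge0,\ |h|\le\delta,\ x+h\ge0\right\}$. *)

theory Defs
  imports "HOL-Analysis.Analysis"
begin

definition p_poly :: "nat \<Rightarrow> nat \<Rightarrow> real \<Rightarrow> real" where
  "p_poly k n a = (\<Sum>i=0..k. real (k choose i) * pochhammer (real n) i * a ^ (k - i))"

definition W_basis :: "nat \<Rightarrow> nat \<Rightarrow> real \<Rightarrow> real \<Rightarrow> real" where
  "W_basis n k a x = exp (- (a * x / (1 + x))) * (p_poly k n a / fact k)
       * (x ^ k / (1 + x) ^ (k + n))"

definition T_op :: "nat \<Rightarrow> real \<Rightarrow> real \<Rightarrow> real \<Rightarrow> (real \<Rightarrow> real) \<Rightarrow> real \<Rightarrow> real" where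
  "T_op n a \<alpha> \<beta> f x = (real n + \<beta>) *
     (\<Sum>k. W_basis n k a x *
        integral {(real k + \<alpha>) / (real n + \<beta>) .. (real k + \<alpha> + 1) / (real n + \<beta>)} f)"

definition rho :: "real \<Rightarrow> real" where
  "rho x = 1 + x\<^sup>2"

definition C_rho :: "(real \<Rightarrow> real) set" where
  "C_rho = {f. continuous_on {0..} f \<and> (\<exists>M. \<forall>x\<ge>0. \<bar>f x\<bar> \<le> M * rho x)}"

definition C_rho_k :: "(real \<Rightarrow> real) set" where
  "C_rho_k = {f \<in> C_rho. \<exists>L. ((\<lambda>x. f x / rho x) \<longlongrightarrow> L) at_top}"

definition Omega :: "(real \<Rightarrow> real) \<Rightarrow> real \<Rightarrow> real" where
  "Omega f \<delta> = Sup {\<bar>f (x + h) - f x\<bar> / ((1 + h\<^sup>2) * (1 + x\<^sup>2)) | x h.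
                      x \<ge> 0 \<and> \<bar>h\<bar> \<le> \<delta> \<and> x + h \<ge> 0}"

end

theory Submission
  imports Defs
begin
lemma nb_sum:
  fixes x :: real and N :: nat
  assumes x: "x \<ge> 0"
  shows "(\<lambda>i. pochhammer (real N) i / fact i * (x^i / (1+x)^(i+N))) sums 1"
proof -
  define y where "y = x/(1+x)"
  have y0: "0 \<le> y" and y1: "y < 1" using x by (auto simp: y_def field_simps)
  have "\<bar>-y\<bar> < 1" using y0 y1 by simp
  from gen_binomial_real[OF this, of "- real N"]
  have s: "(\<lambda>i. (- real N gchoose i) * (-y)^i) sums (1 + - y) powr (- real N)" .
  have e1: "(- real N gchoose i) * (-y)^i = pochhammer (real N) i / fact i * y^i" for i
  proof -
    have "(- real N gchoose i) * (-y)^i = ((-1)^i * (-1)^i) * (pochhammer (real N) i / fact i * y^i)"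
      unfolding gbinomial_pochhammer minus_minus power_minus[of y] by (simp add: mult_ac)
    also have "((-1::real)^i * (-1)^i) = 1" by (simp flip: power_mult_distrib)
    finally show ?thesis by simp
  qed
  have e2: "(1 + - y) powr (- real N) = (1+x)^N"
  proof -
    have "1 + - y = inverse (1+x)" using x by (simp add: y_def field_simps)
    then show ?thesis using x by (simp add: powr_minus powr_realpow power_inverse)
  qed
  from s have "(\<lambda>i. pochhammer (real N) i / fact i * y^i) sums ((1+x)^N)"
    by (simp only: e1 e2)
  from sums_divide[OF this, of "(1+x)^N"]
  have "(\<lambda>i. pochhammer (real N) i / fact i * y^i / (1+x)^N) sums 1" using x by simp
  moreover have "pochhammer (real N) i / fact i * y^i / (1+x)^N = pochhammer (real N) i / fact i * (x^i / (1+x)^(i+N))" for i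
    using x by (simp add: y_def power_divide power_add)
  ultimately show ?thesis by simp
qed

lemma choose_fact_shift:
  "real ((i+r) choose r) / fact (i+r) = 1 / (fact r * fact i)"
  by (simp add: binomial_fact)

lemma nb_choose:
  fixes x :: real and N r :: nat
  assumes x: "x \<ge> 0"
  shows "(\<lambda>i. real (i choose r) * (pochhammer (real N) i / fact i * (x^i / (1+x)^(i+N))))
           sums (pochhammer (real N) r / fact r * x^r)"
proof -
  have z: "\<And>i. i < r \<Longrightarrow> real (i choose r) * (pochhammer (real N) i / fact i * (x^i / (1+x)^(i+N))) = 0"
    by simp
  have eq: "real ((i+r) choose r) * (pochhammer (real N) (i+r) / fact (i+r) * (x^(i+r) / (1+x)^((i+r)+N)))
     = (pochhammer (real N) r / fact r * x^r) * (pochhammer (real (N+r)) i / fact i * (x^i / (1+x)^(i+(N+r))))" for i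
  proof -
    have p: "pochhammer (real N) (r+i) = pochhammer (real N) r * pochhammer (real (N+r)) i"
      by (simp add: pochhammer_product')
    have "real ((i+r) choose r) * (pochhammer (real N) (i+r) / fact (i+r) * (x^(i+r) / (1+x)^((i+r)+N)))
       = (real ((i+r) choose r) / fact (i+r)) * pochhammer (real N) (r+i) * (x^(i+r) / (1+x)^((i+r)+N))"
      by (simp add: add.commute)
    also have "\<dots> = 1 / (fact r * fact i) * (pochhammer (real N) r * pochhammer (real (N+r)) i) * (x^(i+r) / (1+x)^((i+r)+N))"
      by (simp only: choose_fact_shift p)
    also have "\<dots> = (pochhammer (real N) r / fact r * x^r) * (pochhammer (real (N+r)) i / fact i * (x^i / (1+x)^(i+(N+r))))"
      by (simp add: power_add field_simps)
    finally show ?thesis .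
  qed
  have "(\<lambda>i. (pochhammer (real N) r / fact r * x^r) * (pochhammer (real (N+r)) i / fact i * (x^i / (1+x)^(i+(N+r)))))
        sums ((pochhammer (real N) r / fact r * x^r) * 1)"
    by (rule sums_mult[OF nb_sum[OF x]])
  then have "(\<lambda>i. real ((i+r) choose r) * (pochhammer (real N) (i+r) / fact (i+r) * (x^(i+r) / (1+x)^((i+r)+N))))
        sums (pochhammer (real N) r / fact r * x^r)" by (simp only: eq mult_1_right)
  then show ?thesis using sums_zero_iff_shift[where n=r and f="%i. real (i choose r) * (pochhammer (real N) i / fact i * (x^i / (1+x)^(i+N)))"] z by blast
qed

lemma po_choose:
  fixes l :: real and r :: nat
  shows "(\<lambda>j. real (j choose r) * (exp (-l) * l^j / fact j)) sums (l^r / fact r)"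
proof -
  have z: "\<And>j. j < r \<Longrightarrow> real (j choose r) * (exp (-l) * l^j / fact j) = 0" by simp
  have eq: "real ((j+r) choose r) * (exp (-l) * l^(j+r) / fact (j+r)) = (exp (-l) * l^r / fact r) * (l^j / fact j)" for j
  proof -
    have "real ((j+r) choose r) * (exp (-l) * l^(j+r) / fact (j+r)) = (real ((j+r) choose r) / fact (j+r)) * (exp (-l) * l^(j+r))"
      by simp
    also have "\<dots> = 1 / (fact r * fact j) * (exp (-l) * l^(j+r))" by (simp only: choose_fact_shift)
    also have "\<dots> = (exp (-l) * l^r / fact r) * (l^j / fact j)" by (simp add: power_add field_simps)
    finally show ?thesis .
  qed
  have e: "(\<lambda>j. l^j / fact j) sums exp l" using exp_converges[of l] by (simp add: divide_inverse mult.commute)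
  have "(\<lambda>j. (exp (-l) * l^r / fact r) * (l^j / fact j)) sums ((exp (-l) * l^r / fact r) * exp l)"
    by (rule sums_mult[OF e])
  moreover have "(exp (-l) * l^r / fact r) * exp l = l^r / fact r" by (simp add: exp_minus field_simps)
  ultimately have "(\<lambda>j. real ((j+r) choose r) * (exp (-l) * l^(j+r) / fact (j+r))) sums (l^r / fact r)"
    by (simp only: eq)
  then show ?thesis using sums_zero_iff_shift[where n=r and f="%j. real (j choose r) * (exp (-l) * l^j / fact j)"] z by blast
qed

lemma choose2: "real (i choose 2) = real i * (real i - 1) / 2"
  by (simp add: binomial_gbinomial gbinomial_pochhammer' numeral_eq_Suc pochhammer_Suc field_simps)
lemma choose3: "real (i choose 3) = real i * (real i - 1) * (real i - 2) / 6"
  by (simp add: binomial_gbinomial gbinomial_pochhammer' numeral_eq_Suc pochhammer_Suc field_simps)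
lemma choose4: "real (i choose 4) = real i * (real i - 1) * (real i - 2) * (real i - 3) / 24"
  by (simp add: binomial_gbinomial gbinomial_pochhammer' numeral_eq_Suc pochhammer_Suc field_simps)

lemma pow4_choose: "real i ^ 4 = 24 * real (i choose 4) + 36 * real (i choose 3) + 14 * real (i choose 2) + real (i choose 1)"
  by (simp add: choose2 choose3 choose4 field_simps power4_eq_xxxx)

lemma sq_choose: "(real i - c)^2 = 2 * real (i choose 2) + (1 - 2*c) * real (i choose 1) + c^2 * real (i choose 0)"
  by (simp add: choose2 field_simps power2_eq_square)

definition nbw :: "nat \<Rightarrow> real \<Rightarrow> nat \<Rightarrow> real" where
  "nbw N x i = pochhammer (real N) i / fact i * (x^i / (1+x)^(i+N))"
definition pw :: "real \<Rightarrow> nat \<Rightarrow> real" where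
  "pw l j = exp (-l) * l^j / fact j"

lemma nbw_nonneg: "x \<ge> 0 \<Longrightarrow> nbw N x i \<ge> 0"
  by (simp add: nbw_def pochhammer_prod prod_nonneg)  
lemma pw_nonneg: "l \<ge> 0 \<Longrightarrow> pw l j \<ge> 0"
  by (simp add: pw_def)

lemma nbw_choose: "x \<ge> 0 \<Longrightarrow> (\<lambda>i. real (i choose r) * nbw N x i) sums (pochhammer (real N) r / fact r * x^r)"
  unfolding nbw_def by (rule nb_choose)
lemma pw_choose: "(\<lambda>j. real (j choose r) * pw l j) sums (l^r / fact r)"
  unfolding pw_def by (rule po_choose)

lemma nbw_sum1: "x \<ge> 0 \<Longrightarrow> (\<lambda>i. nbw N x i) sums 1"
  using nbw_choose[of x 0 N] by simp
lemma pw_sum1: "(\<lambda>j. pw l j) sums 1"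
  using pw_choose[of 0 l] by simp

lemma sq_sums:
  fixes w :: "nat \<Rightarrow> real"
  assumes s0: "(\<lambda>i. real (i choose 0) * w i) sums A0"
    and s1: "(\<lambda>i. real (i choose 1) * w i) sums A1"
    and s2: "(\<lambda>i. real (i choose 2) * w i) sums A2"
  shows "(\<lambda>i. w i * (real i - c)^2) sums (2 * A2 + (1 - 2*c) * A1 + c^2 * A0)"
proof -
  have "(\<lambda>i. 2 * (real (i choose 2) * w i) + (1 - 2*c) * (real (i choose 1) * w i) + c^2 * (real (i choose 0) * w i))
        sums (2 * A2 + (1 - 2*c) * A1 + c^2 * A0)"
    by (intro sums_add sums_mult s0 s1 s2)
  moreover have "2 * (real (i choose 2) * w i) + (1 - 2*c) * (real (i choose 1) * w i) + c^2 * (real (i choose 0) * w i)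
     = w i * (real i - c)^2" for i
    by (subst sq_choose[of i c]) (simp add: algebra_simps)
  ultimately show ?thesis by simp
qed

lemma p4_sums:
  fixes w :: "nat \<Rightarrow> real"
  assumes s1: "(\<lambda>i. real (i choose 1) * w i) sums A1"
    and s2: "(\<lambda>i. real (i choose 2) * w i) sums A2"
    and s3: "(\<lambda>i. real (i choose 3) * w i) sums A3"
    and s4: "(\<lambda>i. real (i choose 4) * w i) sums A4"
  shows "(\<lambda>i. w i * real i ^ 4) sums (24 * A4 + 36 * A3 + 14 * A2 + A1)"
proof -
  have "(\<lambda>i. 24 * (real (i choose 4) * w i) + 36 * (real (i choose 3) * w i) + 14 * (real (i choose 2) * w i) + (real (i choose 1) * w i))
        sums (24 * A4 + 36 * A3 + 14 * A2 + A1)"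
    by (intro sums_add sums_mult s1 s2 s3 s4)
  moreover have "24 * (real (i choose 4) * w i) + 36 * (real (i choose 3) * w i) + 14 * (real (i choose 2) * w i) + (real (i choose 1) * w i)
     = w i * real i ^ 4" for i
    by (subst pow4_choose[of i]) (simp add: algebra_simps)
  ultimately show ?thesis by simp
qed

lemma nbw_sq: assumes x: "x \<ge> 0" shows "(\<lambda>i. nbw N x i * (real i - real N * x)^2) sums (real N * x * (1 + x))"
proof -
  have h: "(\<lambda>i. nbw N x i * (real i - real N * x)^2) sums
     (2 * (pochhammer (real N) 2 / fact 2 * x^2) + (1 - 2*(real N * x)) * (pochhammer (real N) 1 / fact 1 * x^1) + (real N * x)^2 * (pochhammer (real N) 0 / fact 0 * x^0))"
    by (rule sq_sums[OF nbw_choose[OF x, where r=0 and N=N] nbw_choose[OF x, where r=1 and N=N] nbw_choose[OF x, where r=2 and N=N]])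
  have e: "(2 * (pochhammer (real N) 2 / fact 2 * x^2) + (1 - 2*(real N * x)) * (pochhammer (real N) 1 / fact 1 * x^1) + (real N * x)^2 * (pochhammer (real N) 0 / fact 0 * x^0))
     = real N * x * (1 + x)"
    by (simp add: pochhammer_Suc_prod numeral_eq_Suc algebra_simps power2_eq_square)
  show ?thesis using h unfolding e .
qed

lemma pw_sq: "(\<lambda>j. pw l j * (real j - l)^2) sums l"
proof -
  have h: "(\<lambda>j. pw l j * (real j - l)^2) sums (2 * (l^2 / fact 2) + (1 - 2*l) * (l^1 / fact 1) + l^2 * (l^0/fact 0))"
    by (rule sq_sums[OF pw_choose pw_choose pw_choose])
  have e: "2 * (l^2 / fact 2) + (1 - 2*l) * (l^1 / fact 1) + l^2 * (l^0/fact 0) = l"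
    by (simp add: numeral_eq_Suc algebra_simps power2_eq_square)
  show ?thesis using h unfolding e .
qed

lemma nbw_4: assumes x: "x \<ge> 0" shows "(\<lambda>i. nbw N x i * real i ^ 4) sums
   (pochhammer (real N) 4 * x^4 + 6 * pochhammer (real N) 3 * x^3 + 7 * pochhammer (real N) 2 * x^2 + real N * x)"
proof -
  have h: "(\<lambda>i. nbw N x i * real i ^ 4) sums (24 * (pochhammer (real N) 4 / fact 4 * x^4) + 36 * (pochhammer (real N) 3 / fact 3 * x^3)
     + 14 * (pochhammer (real N) 2 / fact 2 * x^2) + (pochhammer (real N) 1 / fact 1 * x^1))"
    by (rule p4_sums[OF nbw_choose[OF x, where r=1 and N=N] nbw_choose[OF x, where r=2 and N=N] nbw_choose[OF x, where r=3 and N=N] nbw_choose[OF x, where r=4 and N=N]])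
  have e: "24 * (pochhammer (real N) 4 / fact 4 * x^4) + 36 * (pochhammer (real N) 3 / fact 3 * x^3)
     + 14 * (pochhammer (real N) 2 / fact 2 * x^2) + (pochhammer (real N) 1 / fact 1 * x^1)
     = pochhammer (real N) 4 * x^4 + 6 * pochhammer (real N) 3 * x^3 + 7 * pochhammer (real N) 2 * x^2 + real N * x"
    by (simp add: fact_numeral)
  show ?thesis using h unfolding e .
qed

lemma pw_4: "(\<lambda>j. pw l j * real j ^ 4) sums (l^4 + 6 * l^3 + 7 * l^2 + l)"
proof -
  have h: "(\<lambda>j. pw l j * real j ^ 4) sums (24 * (l^4 / fact 4) + 36 * (l^3 / fact 3) + 14 * (l^2/fact 2) + l^1/fact 1)"
    by (rule p4_sums[OF pw_choose pw_choose pw_choose pw_choose])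
  have e: "24 * (l^4 / fact 4) + 36 * (l^3 / fact 3) + 14 * (l^2/fact 2) + l^1/fact 1 = l^4 + 6 * l^3 + 7 * l^2 + l"
    by (simp add: fact_numeral)
  show ?thesis using h unfolding e .
qed

lemma W_conv:
  assumes x: "x \<ge> 0"
  shows "W_basis n k a x = (\<Sum>i\<le>k. nbw n x i * pw (a * x / (1+x)) (k - i))"
proof -
  have p: "p_poly k n a / fact k = (\<Sum>i\<le>k. pochhammer (real n) i / fact i * (a^(k-i) / fact (k-i)))"
    unfolding p_poly_def sum_divide_distrib atLeast0AtMost
  proof (rule sum.cong[OF refl])
    fix i assume "i \<in> {..k}"
    then have ik: "i \<le> k" by simp
    show "real (k choose i) * pochhammer (real n) i * a ^ (k - i) / fact k =
          pochhammer (real n) i / fact i * (a ^ (k - i) / fact (k - i))"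
      using ik by (simp add: binomial_fact field_simps)
  qed
  have t: "exp (- (a * x / (1 + x))) * (pochhammer (real n) i / fact i * (a^(k-i) / fact (k-i))) * (x ^ k / (1 + x) ^ (k + n))
     = nbw n x i * pw (a * x / (1+x)) (k - i)" if ik: "i \<le> k" for i
  proof -
    obtain d where k: "k = i + d" using ik le_Suc_ex by blast
    show ?thesis unfolding nbw_def pw_def k using x
      by (simp add: power_add power_divide power_mult_distrib field_simps)
  qed
  show ?thesis unfolding W_basis_def p sum_distrib_left sum_distrib_right
    by (rule sum.cong[OF refl]) (use t in auto)
qed

lemma conv_sums:
  fixes b c p q :: "nat \<Rightarrow> real"
  assumes "(\<lambda>i. b i * p i) sums A" "(\<lambda>j. c j * q j) sums B"
    and "\<And>i. b i * p i \<ge> 0" "\<And>j. c j * q j \<ge> 0"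
  shows "(\<lambda>k. \<Sum>i\<le>k. b i * c (k - i) * (p i * q (k - i))) sums (A * B)"
proof -
  have s1: "summable (\<lambda>i. norm (b i * p i))" using assms(1,3) by (simp add: sums_summable)
  have s2: "summable (\<lambda>j. norm (c j * q j))" using assms(2,4) by (simp add: sums_summable)
  from Cauchy_product_sums[OF s1 s2]
  have "(\<lambda>k. \<Sum>i\<le>k. b i * p i * (c (k - i) * q (k - i))) sums ((\<Sum>k. b k * p k) * (\<Sum>k. c k * q k))" .
  moreover have "(\<Sum>k. b k * p k) = A" "(\<Sum>k. c k * q k) = B" using assms(1,2) by (auto simp: sums_iff)
  ultimately show ?thesis by (simp add: mult_ac)
qed

lemma Crho_bound:
  assumes "f \<in> C_rho"
  obtains M where "M \<ge> 0" "\<And>x. x \<ge> 0 \<Longrightarrow> \<bar>f x\<bar> \<le> M * (1 + x^2)"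
proof -
  from assms obtain M where M: "\<forall>x\<ge>0. \<bar>f x\<bar> \<le> M * rho x" by (auto simp: C_rho_def)
  have "M \<ge> 0" using M[rule_format, of 0] by (simp add: rho_def)
  then show ?thesis using that M by (auto simp: rho_def)
qed

lemma omega_bdd:
  assumes "f \<in> C_rho"
  shows "bdd_above {\<bar>f (x + h) - f x\<bar> / ((1 + h\<^sup>2) * (1 + x\<^sup>2)) | x h. x \<ge> 0 \<and> \<bar>h\<bar> \<le> \<delta> \<and> x + h \<ge> 0}"
proof -
  obtain M where M0: "M \<ge> 0" and M: "\<And>x. x \<ge> 0 \<Longrightarrow> \<bar>f x\<bar> \<le> M * (1 + x^2)"
    using Crho_bound[OF assms] by blast
  show ?thesis unfolding bdd_above_def
  proof (intro exI[of _ "3*M"] ballI)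
    fix z assume "z \<in> {\<bar>f (x + h) - f x\<bar> / ((1 + h\<^sup>2) * (1 + x\<^sup>2)) | x h. x \<ge> 0 \<and> \<bar>h\<bar> \<le> \<delta> \<and> x + h \<ge> 0}"
    then obtain x h where z: "z = \<bar>f (x + h) - f x\<bar> / ((1 + h\<^sup>2) * (1 + x\<^sup>2))" and x: "x \<ge> 0" "x + h \<ge> 0" by blast
    have pos: "(1 + h\<^sup>2) * (1 + x\<^sup>2) > 0" by (simp add: add_pos_nonneg)
    have "\<bar>f (x + h) - f x\<bar> \<le> M * (1 + (x+h)^2) + M * (1 + x^2)"
      using M[OF x(2)] M[OF x(1)] by linarith
    also have "\<dots> \<le> 3 * M * ((1 + h\<^sup>2) * (1 + x\<^sup>2))"
    proof -
      have "1 + (x+h)^2 + (1 + x^2) \<le> 3 * ((1 + h\<^sup>2) * (1 + x\<^sup>2))"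
      proof -
        have "3 * ((1 + h\<^sup>2) * (1 + x\<^sup>2)) - (1 + (x+h)^2 + (1 + x^2)) = (x-h)^2 + h^2 + 1 + 3*(h*x)^2"
          by (simp add: algebra_simps power2_eq_square)
        moreover have "(x-h)^2 + h^2 + 1 + 3*(h*x)^2 \<ge> 0" by simp
        ultimately show ?thesis by linarith
      qed
      from mult_left_mono[OF this M0]
      have "M * (1 + (x+h)^2 + (1 + x^2)) \<le> M * (3 * ((1 + h\<^sup>2) * (1 + x\<^sup>2)))" .
      moreover have "M * (1 + (x+h)^2 + (1 + x^2)) = M * (1 + (x+h)^2) + M * (1 + x^2)" by (simp only: distrib_left)
      moreover have "M * (3 * ((1 + h\<^sup>2) * (1 + x\<^sup>2))) = 3 * M * ((1 + h\<^sup>2) * (1 + x\<^sup>2))" by (simp only: mult_ac)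
      ultimately show ?thesis by linarith
    qed
    finally show "z \<le> 3 * M" unfolding z using pos by (simp add: divide_le_eq)
  qed
qed

lemma omega_le:
  assumes "f \<in> C_rho" "x \<ge> 0" "x + h \<ge> 0" "\<bar>h\<bar> \<le> \<delta>"
  shows "\<bar>f (x + h) - f x\<bar> \<le> Omega f \<delta> * ((1 + h\<^sup>2) * (1 + x\<^sup>2))"
proof -
  have pos: "(1 + h\<^sup>2) * (1 + x\<^sup>2) > 0" by (simp add: add_pos_nonneg)
  have "\<bar>f (x + h) - f x\<bar> / ((1 + h\<^sup>2) * (1 + x\<^sup>2)) \<le> Omega f \<delta>"
    unfolding Omega_def by (rule cSup_upper[OF _ omega_bdd[OF assms(1)]]) (use assms in blast)
  then show ?thesis using pos by (simp add: divide_le_eq)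
qed

lemma omega_nonneg:
  assumes "f \<in> C_rho" "\<delta> \<ge> 0"
  shows "Omega f \<delta> \<ge> 0"
  using omega_le[OF assms(1), of 0 0 \<delta>] assms(2) by simp

lemma ispir:
  assumes f: "f \<in> C_rho" and d: "\<delta> > 0" and x: "x \<ge> 0" and t: "t \<ge> 0"
  shows "\<bar>f t - f x\<bar> \<le> 2 * (1 + \<bar>t - x\<bar> / \<delta>) * (1 + \<delta>\<^sup>2) * Omega f \<delta> * (1 + (t - x)\<^sup>2) * (1 + x\<^sup>2)"
proof (cases "t = x")
  case True
  have "Omega f \<delta> \<ge> 0" using omega_nonneg[OF f] d by simp
  then show ?thesis using True by (simp add: add_pos_nonneg)
next
  case False
  define h where "h = t - x"
  have h0: "h \<noteq> 0" using False by (simp add: h_def)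
  define N where "N = nat \<lceil>\<bar>h\<bar> / \<delta>\<rceil>"
  have hd: "\<bar>h\<bar> / \<delta> > 0" using h0 d by simp
  have N1: "N \<ge> 1" unfolding N_def using hd by linarith
  have NR: "real N \<ge> \<bar>h\<bar> / \<delta>" unfolding N_def by linarith
  have NU: "real N \<le> 1 + \<bar>h\<bar> / \<delta>" unfolding N_def using hd by linarith
  have Npos: "real N > 0" using N1 by simp
  define z where "z i = x + real i * h / real N" for i
  have z0: "z 0 = x" and zN: "z N = t" using Npos by (auto simp: z_def h_def)
  have step: "\<bar>h / real N\<bar> \<le> \<delta>" using NR d Npos by (simp add: field_simps abs_divide)
  have zpos: "z i \<ge> 0" if "i \<le> N" for i
  proof -
    have q0: "real i / real N \<ge> 0" and q1: "real i / real N \<le> 1" using that Npos by auto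
    have "z i = (1 - real i / real N) * x + (real i / real N) * t" unfolding z_def h_def by (simp add: algebra_simps diff_divide_distrib add_divide_distrib)
    also have "\<dots> \<ge> 0" using q0 q1 x t by (simp add: add_nonneg_nonneg mult_nonneg_nonneg)
    finally show ?thesis .
  qed
  have zx: "\<bar>z i - x\<bar> \<le> \<bar>h\<bar>" if "i \<le> N" for i
  proof -
    have q0: "real i / real N \<ge> 0" and q1: "real i / real N \<le> 1" using that Npos by auto
    have "\<bar>z i - x\<bar> = (real i / real N) * \<bar>h\<bar>" unfolding z_def using q0 by (simp add: abs_mult)
    also have "\<dots> \<le> \<bar>h\<bar>" using q1 q0 by (metis abs_ge_zero mult_left_le_one_le)
    finally show ?thesis .
  qed
  have Om: "Omega f \<delta> \<ge> 0" using omega_nonneg[OF f] d by simp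
  have each: "\<bar>f (z (Suc i)) - f (z i)\<bar> \<le> Omega f \<delta> * ((1 + \<delta>\<^sup>2) * (2 * (1 + h\<^sup>2) * (1 + x\<^sup>2)))" if "i < N" for i
  proof -
    have zs: "z (Suc i) = z i + h / real N" unfolding z_def by (simp add: field_simps add_divide_distrib)
    have "\<bar>f (z (Suc i)) - f (z i)\<bar> \<le> Omega f \<delta> * ((1 + (h / real N)\<^sup>2) * (1 + (z i)\<^sup>2))"
      unfolding zs by (rule omega_le[OF f]) (use zpos[of i] zpos[of "Suc i"] that step zs in auto)
    also have "\<dots> \<le> Omega f \<delta> * ((1 + \<delta>\<^sup>2) * (2 * (1 + h\<^sup>2) * (1 + x\<^sup>2)))"
    proof (rule mult_left_mono[OF _ Om], rule mult_mono)
      show "1 + (h / real N)\<^sup>2 \<le> 1 + \<delta>\<^sup>2" using step by (metis abs_ge_zero power2_abs power_mono add_left_mono)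
      have zi: "\<bar>z i - x\<bar> \<le> \<bar>h\<bar>" using zx[of i] that by simp
      then have "(z i - x)^2 \<le> h^2" by (simp add: abs_le_square_iff)
      then show "1 + (z i)\<^sup>2 \<le> 2 * (1 + h\<^sup>2) * (1 + x\<^sup>2)"
      proof -
        have "2*x^2 + 2*(z i - x)^2 - (z i)^2 = (z i - 2*x)^2" by (simp add: algebra_simps power2_eq_square)
        then have "(z i)^2 \<le> 2*x^2 + 2*h^2" using \<open>(z i - x)^2 \<le> h^2\<close> by (smt (verit) zero_le_power2)
        moreover have "2 * (1 + h\<^sup>2) * (1 + x\<^sup>2) = 2 + 2*h^2 + 2*x^2 + 2*(h*x)^2" by (simp add: algebra_simps power2_eq_square)
        moreover have "(h*x)^2 \<ge> 0" by simp
        ultimately show ?thesis by linarith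
      qed
    qed auto
    finally show ?thesis .
  qed
  have "\<bar>f t - f x\<bar> = \<bar>\<Sum>i<N. f (z (Suc i)) - f (z i)\<bar>"
    using sum_lessThan_telescope[of "\<lambda>i. f (z i)" N] z0 zN by simp
  also have "\<dots> \<le> (\<Sum>i<N. \<bar>f (z (Suc i)) - f (z i)\<bar>)" by (rule sum_abs)
  also have "\<dots> \<le> (\<Sum>i<N. Omega f \<delta> * ((1 + \<delta>\<^sup>2) * (2 * (1 + h\<^sup>2) * (1 + x\<^sup>2))))"
    by (rule sum_mono) (rule each, simp)
  also have "\<dots> = real N * (Omega f \<delta> * ((1 + \<delta>\<^sup>2) * (2 * (1 + h\<^sup>2) * (1 + x\<^sup>2))))" by simp
  also have "\<dots> \<le> (1 + \<bar>h\<bar> / \<delta>) * (Omega f \<delta> * ((1 + \<delta>\<^sup>2) * (2 * (1 + h\<^sup>2) * (1 + x\<^sup>2))))"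
    by (rule mult_right_mono[OF NU]) (use Om in \<open>simp add: add_pos_nonneg\<close>)
  also have "\<dots> = 2 * (1 + \<bar>t - x\<bar> / \<delta>) * (1 + \<delta>\<^sup>2) * Omega f \<delta> * (1 + (t - x)\<^sup>2) * (1 + x\<^sup>2)"
    unfolding h_def by (simp only: mult_ac)
  finally show ?thesis .
qed

lemma Q1:
  fixes v s :: real assumes v: "v \<ge> 0" and s: "s \<ge> 1"
  shows "(1 + v * s) * (1 + v^2) \<le> 2 + 2 * s^2 * v^2 + v^4 / 2"
proof -
  have "2 + 2 * s^2 * v^2 + v^4 / 2 - (1 + v * s) * (1 + v^2)
      = (1 - v * s)^2 / 2 + (s * v - v^2)^2 / 2 + 1 / 2 + (s^2 - 1) * v^2"
    by (simp add: field_simps power2_eq_square power4_eq_xxxx)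
  moreover have "(s^2 - 1) * v^2 \<ge> 0"
  proof -
    have "s^2 \<ge> 1" using s by (simp add: one_le_power)
    then show ?thesis by simp
  qed
  moreover have "(1 - v * s)^2 / 2 \<ge> 0" "(s * v - v^2)^2 / 2 \<ge> 0" by simp_all
  ultimately show ?thesis by linarith
qed

lemma Q2:
  fixes m x t \<alpha> \<beta> :: real and k :: nat
  assumes m: "m \<ge> 1" and a: "0 \<le> \<alpha>" "\<alpha> \<le> \<beta>"
    and t: "t \<in> {(real k + \<alpha>) / m .. (real k + \<alpha> + 1) / m}"
  shows "m * (t - x)^2 \<le> 2 * (real k - m * x)^2 / m + 2 * (\<beta> + 1)^2"
proof -
  define d where "d = t - real k / m"
  have mp: "m > 0" using m by simp
  have d0: "d \<ge> 0" using t a mp by (simp add: d_def field_simps)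
  have d1: "d \<le> (\<beta> + 1) / m"
  proof -
    have "t \<le> (real k + \<alpha> + 1) / m" using t by simp
    also have "\<dots> \<le> (real k + \<beta> + 1) / m" using a mp by (simp add: divide_right_mono)
    finally show ?thesis using mp by (simp add: d_def diff_divide_distrib add_divide_distrib)
  qed
  have tx: "t - x = (real k - m * x) / m + d" using mp by (simp add: d_def field_simps)
  have "(t - x)^2 \<le> 2 * ((real k - m * x) / m)^2 + 2 * d^2"
  proof -
    have "2 * ((real k - m * x) / m)^2 + 2 * d^2 - (t - x)^2 = ((real k - m * x) / m - d)^2"
      unfolding tx by (simp add: algebra_simps power2_eq_square)
    then show ?thesis by (smt (verit) zero_le_power2)
  qed
  then have "m * (t - x)^2 \<le> m * (2 * ((real k - m * x) / m)^2 + 2 * d^2)"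
    using mp by simp
  also have "\<dots> = 2 * (real k - m * x)^2 / m + 2 * m * d^2"
    using mp by (simp add: power2_eq_square field_simps)
  also have "\<dots> \<le> 2 * (real k - m * x)^2 / m + 2 * (\<beta> + 1)^2"
  proof -
    have "d^2 \<le> ((\<beta> + 1) / m)^2" using d0 d1 by (simp add: power_mono)
    then have "m * d^2 \<le> m * ((\<beta> + 1) / m)^2" using mp by simp
    also have "\<dots> = (\<beta> + 1)^2 / m" using mp by (simp add: power2_eq_square field_simps)
    also have "\<dots> \<le> (\<beta> + 1)^2" using m by (simp add: divide_le_eq) (smt (verit) mult_le_cancel_left1 zero_le_power2)
    finally show ?thesis by simp
  qed
  finally show ?thesis .
qed

lemma u4:
  fixes t x :: real assumes "t \<ge> 0" "x \<ge> 0"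
  shows "(t - x)^4 \<le> t^4 + x^4"
proof (cases "t \<le> x")
  case True
  then have "(t - x)^4 = (x - t)^4" by (simp add: power4_eq_xxxx algebra_simps)
  also have "\<dots> \<le> x^4" using True assms by (simp add: power_mono)
  moreover have "t^4 \<ge> 0" by simp
  ultimately show ?thesis by linarith
next
  case False
  then have "(t - x)^4 \<le> t^4" using assms by (simp add: power_mono)
  moreover have "x^4 \<ge> 0" by simp
  ultimately show ?thesis by linarith
qed

lemma intbound:
  fixes f :: "real \<Rightarrow> real" and m \<alpha> x B :: real and k :: nat
  assumes f: "f \<in> C_rho" and a: "0 \<le> \<alpha>" and m: "m \<ge> 1" and B: "B \<ge> 0"
    and bnd: "\<And>t. t \<in> {(real k + \<alpha>) / m .. (real k + \<alpha> + 1) / m} \<Longrightarrow> \<bar>f t - f x\<bar> \<le> B"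
  shows "\<bar>m * integral {(real k + \<alpha>) / m .. (real k + \<alpha> + 1) / m} f - f x\<bar> \<le> B"
proof -
  define lo where "lo = (real k + \<alpha>) / m"
  define hi where "hi = (real k + \<alpha> + 1) / m"
  have mp: "m > 0" using m by simp
  have lohi: "lo \<le> hi" using mp by (simp add: lo_def hi_def divide_right_mono)
  have lo0: "lo \<ge> 0" using a mp by (simp add: lo_def)
  have hl: "hi - lo = 1 / m" using mp by (simp add: lo_def hi_def field_simps)
  have cf: "continuous_on {lo..hi} f"
    using f lo0 unfolding C_rho_def by (auto intro: continuous_on_subset)
  have cg: "continuous_on {lo..hi} (\<lambda>t. f t - f x)" by (intro continuous_intros cf)
  have "integral {lo..hi} (\<lambda>t. f t - f x) = integral {lo..hi} f - integral {lo..hi} (\<lambda>t. f x)"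
    by (rule integral_diff) (use cf integrable_continuous_interval in auto)
  also have "\<dots> = integral {lo..hi} f - f x / m" using lohi hl by simp
  finally have ie: "integral {lo..hi} (\<lambda>t. f t - f x) = integral {lo..hi} f - f x / m" .
  have "norm (integral {lo..hi} (\<lambda>t. f t - f x)) \<le> B * (hi - lo)"
    by (rule integral_bound[OF lohi cg]) (use bnd in \<open>simp add: lo_def hi_def\<close>)
  then have "\<bar>integral {lo..hi} f - f x / m\<bar> \<le> B / m" using ie hl by simp
  then have "m * \<bar>integral {lo..hi} f - f x / m\<bar> \<le> m * (B / m)" using mp by (simp only: mult_le_cancel_left_pos)
  also have "m * (B / m) = B" using mp by simp
  moreover have "m * \<bar>integral {lo..hi} f - f x / m\<bar> = \<bar>m * integral {lo..hi} f - f x\<bar>"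
  proof -
    have "m * (integral {lo..hi} f - f x / m) = m * integral {lo..hi} f - f x" using mp by (simp add: right_diff_distrib)
    then show ?thesis using mp by (metis abs_mult abs_of_pos)
  qed
  ultimately show ?thesis unfolding lo_def hi_def by simp
qed

lemma pointwise:
  fixes f :: "real \<Rightarrow> real" and m \<alpha> \<beta> x t :: real and k :: nat
  assumes f: "f \<in> C_rho" and a: "0 \<le> \<alpha>" "\<alpha> \<le> \<beta>" and m: "m \<ge> 1" and x: "x \<ge> 0"
    and t: "t \<in> {(real k + \<alpha>) / m .. (real k + \<alpha> + 1) / m}"
  shows "\<bar>f t - f x\<bar> \<le> 4 * Omega f (1 / sqrt m) * (1 + x\<^sup>2) *
     (2 + 4 * (real k - m * x)^2 / m + 4 * (\<beta> + 1)^2 + 4 * ((real k + \<beta> + 1) / m)^4 + 4 * x^4)"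
  (is "_ \<le> 4 * ?O * ?X * ?B")
proof -
  have mp: "m > 0" using m by simp
  define \<delta> where "\<delta> = 1 / sqrt m"
  define s where "s = sqrt m"
  have s1: "s \<ge> 1" using m by (simp add: s_def)
  have ss: "s^2 = m" using mp by (simp add: s_def)
  have dp: "\<delta> > 0" using mp by (simp add: \<delta>_def)
  have d2: "\<delta>^2 \<le> 1" using m mp by (simp add: \<delta>_def power_divide)
  have t0: "t \<ge> 0"
  proof -
    have "(real k + \<alpha>) / m \<ge> 0" using a mp by simp
    then show ?thesis using t by simp
  qed
  have tle: "t \<le> (real k + \<beta> + 1) / m"
  proof -
    have "t \<le> (real k + \<alpha> + 1) / m" using t by simp
    also have "\<dots> \<le> (real k + \<beta> + 1) / m" using a mp by (simp add: divide_right_mono)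
    finally show ?thesis .
  qed
  have O0: "?O \<ge> 0" using omega_nonneg[OF f, of "1 / sqrt m"] mp by simp
  have X0: "?X \<ge> 0" by simp
  define u where "u = t - x"
  have isp: "\<bar>f t - f x\<bar> \<le> 2 * (1 + \<bar>u\<bar> / \<delta>) * (1 + \<delta>\<^sup>2) * ?O * (1 + u\<^sup>2) * ?X"
    using ispir[OF f dp x t0] unfolding u_def \<delta>_def by simp
  have ud: "\<bar>u\<bar> / \<delta> = \<bar>u\<bar> * s" by (simp add: \<delta>_def s_def)
  have E1: "(1 + \<bar>u\<bar> * s) * (1 + u^2) \<le> 2 + 2 * m * u^2 + u^4 / 2"
    using Q1[of "\<bar>u\<bar>" s, OF _ s1] ss by simp
  have q2: "m * u^2 \<le> 2 * (real k - m * x)^2 / m + 2 * (\<beta> + 1)^2"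
    unfolding u_def by (rule Q2[OF m a t])
  have q4: "u^4 \<le> ((real k + \<beta> + 1) / m)^4 + x^4"
  proof -
    have "u^4 \<le> t^4 + x^4" unfolding u_def by (rule u4[OF t0 x])
    moreover have "t^4 \<le> ((real k + \<beta> + 1) / m)^4" using t0 tle by (simp add: power_mono)
    ultimately show ?thesis by linarith
  qed
  have x4: "x^4 \<ge> 0" by simp
  have E2: "(1 + \<bar>u\<bar> * s) * (1 + u^2) \<le> ?B"
  proof -
    have h1: "2 * m * u^2 = 2 * (m * u^2)" by simp
    have h2: "4 * (real k - m * x)^2 / m = 2 * (2 * (real k - m * x)^2 / m)" by simp
    have h3: "((real k + \<beta> + 1) / m)^4 \<ge> 0" using m by simp
    show ?thesis using E1 q2 q4 x4 h1 h2 h3 by linarith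
  qed
  have E0: "(1 + \<bar>u\<bar> * s) * (1 + u^2) \<ge> 0" using s1 by (intro mult_nonneg_nonneg) auto
  have "2 * (1 + \<bar>u\<bar> / \<delta>) * (1 + \<delta>\<^sup>2) * ?O * (1 + u\<^sup>2) * ?X
      = 2 * (1 + \<delta>\<^sup>2) * ((1 + \<bar>u\<bar> * s) * (1 + u^2)) * (?O * ?X)" by (simp only: ud mult_ac)
  also have "\<dots> \<le> 2 * 2 * ?B * (?O * ?X)"
  proof (rule mult_right_mono[OF _ mult_nonneg_nonneg[OF O0 X0]], rule mult_mono)
    show "2 * (1 + \<delta>\<^sup>2) \<le> 2 * 2" using d2 by simp
  qed (use E2 E0 in auto)
  also have "\<dots> = 4 * ?O * ?X * ?B" by (simp only: mult_ac)
  finally show ?thesis using isp by linarith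
qed

lemma W_sums1:
  assumes x: "x \<ge> 0" and a: "a \<ge> 0"
  shows "(\<lambda>k. W_basis n k a x) sums 1"
proof -
  have l0: "a * x / (1 + x) \<ge> 0" using a x by simp
  have "(\<lambda>k. \<Sum>i\<le>k. nbw n x i * pw (a * x / (1+x)) (k - i) * (1 * 1)) sums (1 * 1)"
    by (rule conv_sums) (use nbw_sum1[OF x] pw_sum1 nbw_nonneg[OF x] pw_nonneg[OF l0] in auto)
  then show ?thesis by (simp add: W_conv[OF x])
qed

lemma W_nonneg: "x \<ge> 0 \<Longrightarrow> a \<ge> 0 \<Longrightarrow> W_basis n k a x \<ge> 0"
  by (simp add: W_conv nbw_nonneg pw_nonneg sum_nonneg)

lemma sq3: "((p::real) + q + r)^2 \<le> 3 * (p^2 + q^2 + r^2)"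
proof -
  have "3 * (p^2 + q^2 + r^2) - (p + q + r)^2 = (p - q)^2 + (q - r)^2 + (p - r)^2"
    by (simp add: algebra_simps power2_eq_square)
  moreover have "(p - q)^2 + (q - r)^2 + (p - r)^2 \<ge> 0" by simp
  ultimately show ?thesis by linarith
qed

lemma p4_3: "((p::real) + q + r)^4 \<le> 27 * (p^4 + q^4 + r^4)"
proof -
  have a: "(p + q + r)^4 = ((p + q + r)^2)^2" by (simp add: power4_eq_xxxx power2_eq_square)
  have b: "((p + q + r)^2)^2 \<le> (3 * (p^2 + q^2 + r^2))^2"
    by (rule power_mono[OF sq3]) simp
  have c: "(3 * (p^2 + q^2 + r^2))^2 = 9 * (p^2 + q^2 + r^2)^2" by (simp add: power2_eq_square algebra_simps)
  have d: "(p^2 + q^2 + r^2)^2 \<le> 3 * ((p^2)^2 + (q^2)^2 + (r^2)^2)" by (rule sq3)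
  have e: "(p^2)^2 = p^4" "(q^2)^2 = q^4" "(r^2)^2 = r^4" by (simp_all add: power4_eq_xxxx power2_eq_square)
  have d': "(p^2 + q^2 + r^2)^2 \<le> 3 * (p^4 + q^4 + r^4)" using d unfolding e .
  have "(p + q + r)^4 \<le> 9 * (p^2 + q^2 + r^2)^2" unfolding a using b unfolding c .
  also have "\<dots> \<le> 9 * (3 * (p^4 + q^4 + r^4))" using d' by simp
  finally show ?thesis by simp
qed

definition Bk :: "nat \<Rightarrow> real \<Rightarrow> real \<Rightarrow> real \<Rightarrow> nat \<Rightarrow> real" where
  "Bk n \<beta> x m k = 2 + 4 * (real k - m * x)^2 / m + 4 * (\<beta> + 1)^2 + 4 * ((real k + \<beta> + 1) / m)^4 + 4 * x^4"

definition A0 :: "real \<Rightarrow> real \<Rightarrow> real \<Rightarrow> real \<Rightarrow> real" where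
  "A0 \<beta> x m l = 2 + 12 * (l - \<beta> * x)^2 / m + 4 * (\<beta> + 1)^2 + 108 * (\<beta> + 1)^4 / m^4 + 4 * x^4"

lemma B_le_G:
  fixes i j n :: nat and \<beta> x l m :: real
  assumes m: "m = real n + \<beta>" "m \<ge> 1" and b: "\<beta> \<ge> 0"
  shows "Bk n \<beta> x m (i + j) \<le> A0 \<beta> x m l + 12 / m * (real i - real n * x)^2 + 12 / m * (real j - l)^2
           + 108 / m^4 * real i ^ 4 + 108 / m^4 * real j ^ 4"
proof -
  have mp: "m > 0" using m by simp
  have e1: "real (i + j) - m * x = (real i - real n * x) + (real j - l) + (l - \<beta> * x)"
    using m by (simp add: algebra_simps)
  have s1: "(real (i + j) - m * x)^2 \<le> 3 * ((real i - real n * x)^2 + (real j - l)^2 + (l - \<beta> * x)^2)"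
    unfolding e1 by (rule sq3)
  have t1: "4 * (real (i + j) - m * x)^2 / m \<le> 12 * (l - \<beta> * x)^2 / m + 12 / m * (real i - real n * x)^2 + 12 / m * (real j - l)^2"
  proof -
    have "4 * (real (i + j) - m * x)^2 / m \<le> 4 * (3 * ((real i - real n * x)^2 + (real j - l)^2 + (l - \<beta> * x)^2)) / m"
      using s1 mp by (simp add: divide_right_mono)
    also have "\<dots> = 12 * (l - \<beta> * x)^2 / m + 12 / m * (real i - real n * x)^2 + 12 / m * (real j - l)^2"
      using mp by (simp add: field_simps)
    finally show ?thesis .
  qed
  have e2: "real (i + j) + \<beta> + 1 = real i + real j + (\<beta> + 1)" by simp
  have s2: "(real (i + j) + \<beta> + 1)^4 \<le> 27 * (real i ^ 4 + real j ^ 4 + (\<beta> + 1)^4)"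
    unfolding e2 by (rule p4_3)
  have t2: "4 * ((real (i + j) + \<beta> + 1) / m)^4 \<le> 108 * (\<beta> + 1)^4 / m^4 + 108 / m^4 * real i ^ 4 + 108 / m^4 * real j ^ 4"
  proof -
    have "4 * ((real (i + j) + \<beta> + 1) / m)^4 = 4 * (real (i + j) + \<beta> + 1)^4 / m^4" by (simp add: power_divide)
    also have "\<dots> \<le> 4 * (27 * (real i ^ 4 + real j ^ 4 + (\<beta> + 1)^4)) / m^4"
      using s2 mp by (simp add: divide_right_mono)
    also have "\<dots> = 108 * (\<beta> + 1)^4 / m^4 + 108 / m^4 * real i ^ 4 + 108 / m^4 * real j ^ 4"
      using mp by (simp add: field_simps)
    finally show ?thesis .
  qed
  show ?thesis using t1 t2 unfolding Bk_def A0_def by linarith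
qed

lemma powers_le_P:
  fixes x :: real assumes x: "x \<ge> 0"
  shows "1 \<le> (1 + x^2)^2" "x \<le> (1 + x^2)^2" "x^2 \<le> (1 + x^2)^2" "x^3 \<le> (1 + x^2)^2" "x^4 \<le> (1 + x^2)^2"
proof -
  have P: "(1 + x^2)^2 = 1 + 2 * x^2 + x^4" by (simp add: power2_eq_square power4_eq_xxxx algebra_simps)
  have x2: "x^2 \<ge> 0" "x^4 \<ge> 0" by simp_all
  show "1 \<le> (1 + x^2)^2" unfolding P using x2 by linarith
  have "2 * x \<le> 1 + x^2"
  proof -
    have "1 + x^2 - 2 * x = (x - 1)^2" by (simp add: power2_eq_square algebra_simps)
    moreover have "(x - 1)^2 \<ge> 0" by simp
    ultimately show ?thesis by linarith
  qed
  then show "x \<le> (1 + x^2)^2" unfolding P using x2 x by linarith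
  show "x^2 \<le> (1 + x^2)^2" unfolding P using x2 by linarith
  have "x^2 + x^4 - x^3 = x^2 * ((x - 1/2)^2 + 3/4)" by (simp add: power2_eq_square power3_eq_cube power4_eq_xxxx algebra_simps)
  moreover have "x^2 * ((x - 1/2)^2 + 3/4) \<ge> 0" by simp
  ultimately show "x^3 \<le> (1 + x^2)^2" unfolding P using x2 by linarith
  show "x^4 \<le> (1 + x^2)^2" unfolding P using x2 by linarith
qed

lemma poch_bounds:
  fixes N m :: real assumes N: "1 \<le> N" "N \<le> m"
  shows "pochhammer N 4 \<le> 24 * m^4" "pochhammer N 3 \<le> 6 * m^4" "pochhammer N 2 \<le> 2 * m^4" "N \<le> m^4"
proof -
  have m1: "m \<ge> 1" using N by simp
  have p4: "pochhammer N 4 = N * (N + 1) * (N + 2) * (N + 3)" by (simp add: numeral_eq_Suc pochhammer_Suc)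
  have p3: "pochhammer N 3 = N * (N + 1) * (N + 2)" by (simp add: numeral_eq_Suc pochhammer_Suc)
  have p2: "pochhammer N 2 = N * (N + 1)" by (simp add: numeral_eq_Suc pochhammer_Suc)
  have a1: "N + 1 \<le> 2 * m" "N + 2 \<le> 3 * m" "N + 3 \<le> 4 * m" using N by linarith+
  have mm: "m \<le> m^2" "m^2 \<le> m^3" "m^3 \<le> m^4" using m1
    by (simp_all add: power2_eq_square power3_eq_cube power4_eq_xxxx)
  have "N * (N + 1) * (N + 2) * (N + 3) \<le> m * (2 * m) * (3 * m) * (4 * m)"
    using N a1 by (intro mult_mono) auto
  then show "pochhammer N 4 \<le> 24 * m^4" unfolding p4 by (simp add: power4_eq_xxxx)
  have "N * (N + 1) * (N + 2) \<le> m * (2 * m) * (3 * m)"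
    using N a1 by (intro mult_mono) auto
  then show "pochhammer N 3 \<le> 6 * m^4" unfolding p3 using mm by (simp add: power3_eq_cube)
  have "N * (N + 1) \<le> m * (2 * m)"
    using N a1 by (intro mult_mono) auto
  then show "pochhammer N 2 \<le> 2 * m^4" unfolding p2 using mm by (simp add: power2_eq_square)
  show "N \<le> m^4" using N mm by linarith
qed

lemma div_le_self_real: "0 \<le> (c::real) \<Longrightarrow> 1 \<le> d \<Longrightarrow> c / d \<le> c"
  using divide_left_mono[of 1 d c] by simp

definition Kc :: "real \<Rightarrow> real \<Rightarrow> real" where
  "Kc a \<beta> = (2 + 24 * a^2 + 4 * (\<beta> + 1)^2 + 108 * (\<beta> + 1)^4) + 24 * \<beta>^2 + 28 + 12 * a + 8100
      + 108 * (a^4 + 6 * a^3 + 7 * a^2 + a)"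

lemma S_bound:
  fixes n :: nat and a \<beta> x m l :: real
  assumes n: "n \<ge> 1" and b: "\<beta> \<ge> 0" and a: "a \<ge> 0" and x: "x \<ge> 0"
    and m: "m = real n + \<beta>" and l: "0 \<le> l" "l \<le> a"
  shows "A0 \<beta> x m l * 1 * 1 + 12 / m * (real n * x * (1 + x)) * 1 + 1 * (12 / m * l)
       + 108 / m^4 * (pochhammer (real n) 4 * x^4 + 6 * pochhammer (real n) 3 * x^3 + 7 * pochhammer (real n) 2 * x^2 + real n * x) * 1
       + 1 * (108 / m^4 * (l^4 + 6 * l^3 + 7 * l^2 + l))
       \<le> Kc a \<beta> * (1 + x^2)^2"
proof -
  define P where "P = (1 + x^2)^2"
  note pw = powers_le_P[OF x, folded P_def]
  have m1: "m \<ge> 1" using n b m by simp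
  have mp: "m > 0" using m1 by simp
  have m4: "m^4 \<ge> 1" using m1 by (simp add: one_le_power)
  have Nm: "1 \<le> real n" "real n \<le> m" using n b m by simp_all
  note pb = poch_bounds[OF Nm]
  define C0 where "C0 = 2 + 24 * a^2 + 4 * (\<beta> + 1)^2 + 108 * (\<beta> + 1)^4"
  define Pa where "Pa = a^4 + 6 * a^3 + 7 * a^2 + a"
  have C00: "C0 \<ge> 0" by (simp add: C0_def)
  have Pa0: "Pa \<ge> 0" using a by (simp add: Pa_def)
  have Kexp: "Kc a \<beta> * P = C0 * P + 24 * \<beta>^2 * P + 28 * P + 12 * a * P + 8100 * P + 108 * Pa * P"
    by (simp add: Kc_def C0_def Pa_def algebra_simps)
  have A0b: "A0 \<beta> x m l \<le> C0 + 24 * \<beta>^2 * x^2 + 4 * x^4"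
  proof -
    have sq: "(l - \<beta> * x)^2 \<le> 2 * a^2 + 2 * \<beta>^2 * x^2"
    proof -
      have "(l - \<beta> * x)^2 \<le> 2 * l^2 + 2 * (\<beta> * x)^2"
      proof -
        have "2 * l^2 + 2 * (\<beta> * x)^2 - (l - \<beta> * x)^2 = (l + \<beta> * x)^2" by (simp add: power2_eq_square algebra_simps)
        then show ?thesis by (smt (verit) zero_le_power2)
      qed
      moreover have "l^2 \<le> a^2" using l by (simp add: power_mono)
      ultimately show ?thesis by (simp add: power_mult_distrib)
    qed
    have d1: "12 * (l - \<beta> * x)^2 / m \<le> 12 * (l - \<beta> * x)^2"
      using m1 by (intro div_le_self_real) auto
    have d2: "108 * (\<beta> + 1)^4 / m^4 \<le> 108 * (\<beta> + 1)^4"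
    proof -
      have "(\<beta> + 1)^4 \<ge> 0" by simp
      then show ?thesis using m4 div_le_self_real[of "108 * (\<beta> + 1)^4" "m^4"] by simp
    qed
    show ?thesis using d1 d2 sq unfolding A0_def C0_def by linarith
  qed
  have T2: "12 / m * (real n * x * (1 + x)) \<le> 12 * x + 12 * x^2"
  proof -
    have "real n * x * (1 + x) \<le> m * (x * (1 + x))" 
    proof -
      have "x * (1 + x) \<ge> 0" using x by simp
      from mult_right_mono[OF Nm(2) this] show ?thesis by (simp add: mult.assoc)
    qed
    then have "12 / m * (real n * x * (1 + x)) \<le> 12 / m * (m * (x * (1 + x)))" using mp by (intro mult_left_mono) auto
    also have "\<dots> = 12 * x + 12 * x^2" using mp by (simp add: power2_eq_square algebra_simps)
    finally show ?thesis .
  qed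
  have T3: "12 / m * l \<le> 12 * a"
  proof -
    have "12 * l / m \<le> 12 * l" using m1 l by (intro div_le_self_real) auto
    moreover have "12 / m * l = 12 * l / m" by simp
    ultimately show ?thesis using l by linarith
  qed
  have T4: "108 / m^4 * (pochhammer (real n) 4 * x^4 + 6 * pochhammer (real n) 3 * x^3 + 7 * pochhammer (real n) 2 * x^2 + real n * x)
      \<le> 108 * (24 * x^4 + 36 * x^3 + 14 * x^2 + x)"
  proof -
    have x34: "x^4 \<ge> 0" "x^3 \<ge> 0" "x^2 \<ge> 0" using x by simp_all
    have "pochhammer (real n) 4 * x^4 + 6 * pochhammer (real n) 3 * x^3 + 7 * pochhammer (real n) 2 * x^2 + real n * x
        \<le> (24 * m^4) * x^4 + 6 * (6 * m^4) * x^3 + 7 * (2 * m^4) * x^2 + m^4 * x"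
      using pb x34 x by (intro add_mono mult_right_mono mult_left_mono) auto
    also have "\<dots> = m^4 * (24 * x^4 + 36 * x^3 + 14 * x^2 + x)" by (simp add: algebra_simps)
    finally have h: "pochhammer (real n) 4 * x^4 + 6 * pochhammer (real n) 3 * x^3 + 7 * pochhammer (real n) 2 * x^2 + real n * x
        \<le> m^4 * (24 * x^4 + 36 * x^3 + 14 * x^2 + x)" .
    have "108 / m^4 * (pochhammer (real n) 4 * x^4 + 6 * pochhammer (real n) 3 * x^3 + 7 * pochhammer (real n) 2 * x^2 + real n * x)
        \<le> 108 / m^4 * (m^4 * (24 * x^4 + 36 * x^3 + 14 * x^2 + x))"
      using h mp by (intro mult_left_mono) auto
    also have "\<dots> = 108 * (24 * x^4 + 36 * x^3 + 14 * x^2 + x)" using mp by simp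
    finally show ?thesis .
  qed
  have T5: "108 / m^4 * (l^4 + 6 * l^3 + 7 * l^2 + l) \<le> 108 * Pa"
  proof -
    have "l^4 + 6 * l^3 + 7 * l^2 + l \<le> Pa" unfolding Pa_def using l
      by (intro add_mono mult_left_mono power_mono) auto
    moreover have "l^4 + 6 * l^3 + 7 * l^2 + l \<ge> 0" using l by simp
    ultimately have "(l^4 + 6 * l^3 + 7 * l^2 + l) / m^4 \<le> Pa" using m4
      by (intro order_trans[OF div_le_self_real]) auto
    then have "108 * ((l^4 + 6 * l^3 + 7 * l^2 + l) / m^4) \<le> 108 * Pa" by (rule mult_left_mono) simp
    moreover have "108 / m^4 * (l^4 + 6 * l^3 + 7 * l^2 + l) = 108 * ((l^4 + 6 * l^3 + 7 * l^2 + l) / m^4)" by (simp only: times_divide_eq_left times_divide_eq_right)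
    ultimately show ?thesis by linarith
  qed
  have f1: "C0 \<le> C0 * P" using C00 pw(1) by (simp add: mult_le_cancel_left1)
  have f2: "24 * \<beta>^2 * x^2 \<le> 24 * \<beta>^2 * P" using pw(3) by (simp add: mult_left_mono)
  have f3: "12 * a \<le> 12 * a * P" using a pw(1) by (simp add: mult_le_cancel_left1)
  have f4: "108 * Pa \<le> 108 * Pa * P" using Pa0 pw(1) by (simp add: mult_le_cancel_left1)
  show ?thesis unfolding P_def[symmetric] Kexp using A0b T2 T3 T4 T5 f1 f2 f3 f4 pw by simp
qed

lemma Bk_nonneg: "m > 0 \<Longrightarrow> Bk n \<beta> x m k \<ge> 0"
  unfolding Bk_def by (intro add_nonneg_nonneg) auto

lemma WB_bound:
  fixes n :: nat and a \<beta> x m :: real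
  assumes n: "n \<ge> 1" and b: "\<beta> \<ge> 0" and a: "a \<ge> 0" and x: "x \<ge> 0"
    and m: "m = real n + \<beta>"
  shows "summable (\<lambda>k. W_basis n k a x * Bk n \<beta> x m k) \<and>
         (\<Sum>k. W_basis n k a x * Bk n \<beta> x m k) \<le> Kc a \<beta> * (1 + x^2)^2"
proof -
  define l where "l = a * x / (1 + x)"
  have l0: "l \<ge> 0" using a x by (simp add: l_def)
  have la: "l \<le> a"
  proof -
    have "x / (1 + x) \<le> 1" using x by simp
    then have "a * (x / (1 + x)) \<le> a * 1" using a by (rule mult_left_mono)
    then show ?thesis by (simp add: l_def)
  qed
  have m1: "m \<ge> 1" using n b m by simp
  have mp: "m > 0" using m1 by simp
  define A where "A = A0 \<beta> x m l"
  have A00: "A \<ge> 0" using mp unfolding A_def A0_def by (intro add_nonneg_nonneg) auto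
  define b' where "b' = nbw n x"
  define c' where "c' = pw l"
  have bnn: "b' i \<ge> 0" for i using nbw_nonneg[OF x] by (simp add: b'_def)
  have cnn: "c' j \<ge> 0" for j using pw_nonneg[OF l0] by (simp add: c'_def)
  define G where "G i j = A + 12 / m * (real i - real n * x)^2 + 12 / m * (real j - l)^2
           + 108 / m^4 * real i ^ 4 + 108 / m^4 * real j ^ 4" for i j
  have sb1: "(\<lambda>i. b' i * 1) sums 1" using nbw_sum1[OF x] by (simp add: b'_def)
  have sc1: "(\<lambda>j. c' j * 1) sums 1" using pw_sum1 by (simp add: c'_def)
  have sbA: "(\<lambda>i. b' i * A) sums (1 * A)" using sums_mult2[OF nbw_sum1[OF x, where N=n], where c=A] by (simp add: b'_def)
  have sb2: "(\<lambda>i. b' i * (12 / m * (real i - real n * x)^2)) sums (12 / m * (real n * x * (1 + x)))"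
    using sums_mult[OF nbw_sq[OF x, where N=n], where c="12 / m"] by (simp add: b'_def mult_ac)
  have sc2: "(\<lambda>j. c' j * (12 / m * (real j - l)^2)) sums (12 / m * l)"
    using sums_mult[OF pw_sq[where l=l], where c="12 / m"] by (simp add: c'_def mult_ac)
  have sb4: "(\<lambda>i. b' i * (108 / m^4 * real i ^ 4)) sums (108 / m^4 * (pochhammer (real n) 4 * x^4 + 6 * pochhammer (real n) 3 * x^3 + 7 * pochhammer (real n) 2 * x^2 + real n * x))"
    using sums_mult[OF nbw_4[OF x, where N=n], where c="108 / m^4"] by (simp add: b'_def mult_ac)
  have sc4: "(\<lambda>j. c' j * (108 / m^4 * real j ^ 4)) sums (108 / m^4 * (l^4 + 6 * l^3 + 7 * l^2 + l))"
    using sums_mult[OF pw_4[where l=l], where c="108 / m^4"] by (simp add: c'_def mult_ac)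
  have nn2: "b' i * (12 / m * (real i - real n * x)^2) \<ge> 0" for i using bnn mp by simp
  have nn3: "c' j * (12 / m * (real j - l)^2) \<ge> 0" for j using cnn mp by simp
  have nn4: "b' i * (108 / m^4 * real i ^ 4) \<ge> 0" for i using bnn mp by simp
  have nn5: "c' j * (108 / m^4 * real j ^ 4) \<ge> 0" for j using cnn mp by simp
  have nnA: "b' i * A \<ge> 0" for i using bnn A00 by simp
  have nn1b: "b' i * 1 \<ge> 0" for i using bnn by simp
  have nn1c: "c' j * 1 \<ge> 0" for j using cnn by simp
  note C1 = conv_sums[OF sbA sc1 nnA nn1c]
  note C2 = conv_sums[OF sb2 sc1 nn2 nn1c]
  note C3 = conv_sums[OF sb1 sc2 nn1b nn3]
  note C4 = conv_sums[OF sb4 sc1 nn4 nn1c]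
  note C5 = conv_sums[OF sb1 sc4 nn1b nn5]
  define S where "S = 1 * A * 1 + 12 / m * (real n * x * (1 + x)) * 1 + 1 * (12 / m * l)
       + 108 / m^4 * (pochhammer (real n) 4 * x^4 + 6 * pochhammer (real n) 3 * x^3 + 7 * pochhammer (real n) 2 * x^2 + real n * x) * 1
       + 1 * (108 / m^4 * (l^4 + 6 * l^3 + 7 * l^2 + l))"
  define H where "H k = (\<Sum>i\<le>k. b' i * c' (k - i) * G i (k - i))" for k
  have HS: "H sums S"
  proof -
    have "(\<lambda>k. (\<Sum>i\<le>k. b' i * c' (k - i) * (A * 1)) + (\<Sum>i\<le>k. b' i * c' (k - i) * (12 / m * (real i - real n * x)^2 * 1))
         + (\<Sum>i\<le>k. b' i * c' (k - i) * (1 * (12 / m * (real (k - i) - l)^2)))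
         + (\<Sum>i\<le>k. b' i * c' (k - i) * (108 / m^4 * real i ^ 4 * 1))
         + (\<Sum>i\<le>k. b' i * c' (k - i) * (1 * (108 / m^4 * real (k - i) ^ 4)))) sums S"
      unfolding S_def by (intro sums_add C1 C2 C3 C4 C5)
    moreover have "(\<Sum>i\<le>k. b' i * c' (k - i) * (A * 1)) + (\<Sum>i\<le>k. b' i * c' (k - i) * (12 / m * (real i - real n * x)^2 * 1))
         + (\<Sum>i\<le>k. b' i * c' (k - i) * (1 * (12 / m * (real (k - i) - l)^2)))
         + (\<Sum>i\<le>k. b' i * c' (k - i) * (108 / m^4 * real i ^ 4 * 1))
         + (\<Sum>i\<le>k. b' i * c' (k - i) * (1 * (108 / m^4 * real (k - i) ^ 4))) = H k" for k
      unfolding H_def G_def by (simp only: sum.distrib[symmetric]) (rule sum.cong, simp, simp add: algebra_simps)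
    ultimately show ?thesis by simp
  qed
  have WH: "W_basis n k a x * Bk n \<beta> x m k \<le> H k" for k
  proof -
    have "W_basis n k a x * Bk n \<beta> x m k = (\<Sum>i\<le>k. b' i * c' (k - i) * Bk n \<beta> x m (i + (k - i)))"
      unfolding W_conv[OF x] sum_distrib_right b'_def c'_def l_def by simp
    also have "\<dots> \<le> H k" unfolding H_def
    proof (rule sum_mono)
      fix i assume "i \<in> {..k}"
      show "b' i * c' (k - i) * Bk n \<beta> x m (i + (k - i)) \<le> b' i * c' (k - i) * G i (k - i)"
        unfolding G_def A_def
        by (rule mult_left_mono[OF B_le_G[OF m m1 b]]) (use bnn cnn in simp)
    qed
    finally show ?thesis .
  qed
  have WB0: "W_basis n k a x * Bk n \<beta> x m k \<ge> 0" for k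
    using W_nonneg[OF x a] Bk_nonneg[OF mp] by simp
  have sH: "summable H" using HS by (simp add: sums_summable)
  have sW: "summable (\<lambda>k. W_basis n k a x * Bk n \<beta> x m k)"
    by (rule summable_comparison_test'[OF sH]) (use WH WB0 in auto)
  have "(\<Sum>k. W_basis n k a x * Bk n \<beta> x m k) \<le> (\<Sum>k. H k)"
    by (rule suminf_le) (use WH sW sH in auto)
  also have "(\<Sum>k. H k) = S" using HS by (simp add: sums_iff)
  also have "S \<le> Kc a \<beta> * (1 + x^2)^2"
    using S_bound[OF n b a x m l0 la] unfolding S_def A_def by simp
  finally show ?thesis using sW by simp
qed

theorem theorem4p3:
  fixes a \<alpha> \<beta> :: real
  assumes "a \<ge> 0" and "0 \<le> \<alpha>" and "\<alpha> \<le> \<beta>"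
  shows "\<exists>M>0. \<forall>f\<in>C_rho_k. \<forall>n::nat. n \<ge> 1 \<longrightarrow>
           (\<forall>x\<ge>0. \<bar>T_op n a \<alpha> \<beta> f x - f x\<bar> / (1 + x\<^sup>2) ^ 3
                    \<le> M * Omega f (1 / sqrt (real n + \<beta>)))"
proof (intro exI[of _ "4 * Kc a \<beta>"] conjI ballI allI impI)
  have a: "a \<ge> 0" and al: "0 \<le> \<alpha>" "\<alpha> \<le> \<beta>" using assms by auto
  have b: "\<beta> \<ge> 0" using al by simp
  show "4 * Kc a \<beta> > 0" unfolding Kc_def using a b by (intro mult_pos_pos add_pos_nonneg) auto
  fix f :: "real \<Rightarrow> real" and n :: nat and x :: real
  assume fk: "f \<in> C_rho_k" and n: "n \<ge> 1" and x: "x \<ge> 0"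
  have f: "f \<in> C_rho" using fk by (simp add: C_rho_k_def)
  define m where "m = real n + \<beta>"
  have m1: "m \<ge> 1" using n b by (simp add: m_def)
  have mp: "m > 0" using m1 by simp
  define Om where "Om = Omega f (1 / sqrt m)"
  have O0: "Om \<ge> 0" unfolding Om_def using omega_nonneg[OF f, of "1 / sqrt m"] mp by simp
  define X where "X = 1 + x^2"
  have X1: "X \<ge> 1" by (simp add: X_def)
  define w where "w k = W_basis n k a x" for k
  define I where "I k = integral {(real k + \<alpha>) / m .. (real k + \<alpha> + 1) / m} f" for k
  define g where "g k = m * I k - f x" for k
  define B where "B k = Bk n \<beta> x m k" for k
  have w0: "w k \<ge> 0" for k using W_nonneg[OF x a] by (simp add: w_def)
  have ws: "w sums 1" using W_sums1[OF x a, of n] unfolding w_def by simp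
  have WB: "summable (\<lambda>k. w k * B k)" "(\<Sum>k. w k * B k) \<le> Kc a \<beta> * X^2"
    using WB_bound[OF n b a x m_def] by (simp_all add: w_def B_def X_def)
  have gb: "\<bar>g k\<bar> \<le> 4 * Om * X * B k" for k
    unfolding g_def I_def
  proof (rule intbound[OF f al(1) m1])
    show "0 \<le> 4 * Om * X * B k" using O0 X1 Bk_nonneg[OF mp] by (simp add: B_def)
    fix t assume "t \<in> {(real k + \<alpha>) / m .. (real k + \<alpha> + 1) / m}"
    from pointwise[OF f al m1 x this]
    show "\<bar>f t - f x\<bar> \<le> 4 * Om * X * B k" by (simp add: Om_def X_def B_def Bk_def)
  qed
  have wgb: "norm (w k * g k) \<le> (4 * Om * X) * (w k * B k)" for k
  proof -
    have "norm (w k * g k) = w k * \<bar>g k\<bar>" using w0 by (simp add: abs_mult)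
    also have "\<dots> \<le> w k * (4 * Om * X * B k)" by (rule mult_left_mono[OF gb w0])
    finally show ?thesis by (simp add: mult_ac)
  qed
  have sb: "summable (\<lambda>k. (4 * Om * X) * (w k * B k))" using WB(1) by (rule summable_mult)
  have swg: "summable (\<lambda>k. w k * g k)" by (rule summable_comparison_test'[OF sb]) (rule wgb)
  have swgn: "summable (\<lambda>k. norm (w k * g k))" by (rule summable_comparison_test'[OF sb]) (use wgb in auto)
  define SG where "SG = (\<Sum>k. w k * g k)"
  have wgs: "(\<lambda>k. w k * g k) sums SG" using swg by (simp add: SG_def summable_sums)
  have eqI: "w k * I k = (w k * g k + w k * f x) / m" for k
    using mp by (simp add: g_def field_simps)
  have "(\<lambda>k. (w k * g k + w k * f x) / m) sums ((SG + 1 * f x) / m)"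
    by (intro sums_divide sums_add wgs sums_mult2 ws)
  then have Is: "(\<lambda>k. w k * I k) sums ((SG + f x) / m)" by (simp add: eqI)
  have T: "T_op n a \<alpha> \<beta> f x = SG + f x"
  proof -
    have "T_op n a \<alpha> \<beta> f x = m * (\<Sum>k. w k * I k)" unfolding T_op_def m_def w_def I_def by simp
    also have "(\<Sum>k. w k * I k) = (SG + f x) / m" using Is by (simp add: sums_iff)
    finally show ?thesis using mp by simp
  qed
  have "\<bar>T_op n a \<alpha> \<beta> f x - f x\<bar> = norm SG" unfolding T by simp
  also have "\<dots> \<le> (\<Sum>k. norm (w k * g k))" unfolding SG_def by (rule summable_norm[OF swgn])
  also have "\<dots> \<le> (\<Sum>k. (4 * Om * X) * (w k * B k))"
    by (rule suminf_le) (use wgb swgn sb in auto)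
  also have "\<dots> = (4 * Om * X) * (\<Sum>k. w k * B k)" using WB(1) by (rule suminf_mult)
  also have "\<dots> \<le> (4 * Om * X) * (Kc a \<beta> * X^2)"
    by (rule mult_left_mono[OF WB(2)]) (use O0 X1 in simp)
  also have "\<dots> = 4 * Kc a \<beta> * Om * X^3" by (simp add: power2_eq_square power3_eq_cube mult_ac)
  finally have main: "\<bar>T_op n a \<alpha> \<beta> f x - f x\<bar> \<le> 4 * Kc a \<beta> * Om * X^3" .
  have X3: "X^3 > 0" using X1 by simp
  show "\<bar>T_op n a \<alpha> \<beta> f x - f x\<bar> / (1 + x\<^sup>2) ^ 3 \<le> 4 * Kc a \<beta> * Omega f (1 / sqrt (real n + \<beta>))"
    using main X3 unfolding X_def[symmetric] Om_def m_def by (simp add: divide_le_eq)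
qed

end
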